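(* Let $k$ be an integer with $9\le k\le 17$. For every $k$-uniform hypergraph $H=(V,E)$ with $m=|E|$, \[100\,\tau(H) \le 9.5976\,n_1 + 14.8298\,n_2 + 16.1586\,n_3 + 16.6667\,n_{\ge 4} + 16.6667\,m.\]
   Context: A hypergraph $H=(V,E)$ consists of a finite vertex set $V$ and a finite collection $E$ of subsets of $V$ (edges); it is $k$-uniform if every edge has exactly $k$ vertices. The degree of a vertex $v$ is the number of edges containing $v$. For $i\ge 1$, $n_i$ denotes the number of vertices of degree exactly $i$, and $n_{\ge i}=\sum_{j\ge i} n_j$. A transversal is a vertex set meeting every edge; $\tau(H)$ is the minimum size of a transversal. *)

theory Defs
  imports Complex_Main "HOL-Library.Multiset"
begin

definition hypergraph :: "'a set \<Rightarrow> 'a set multiset \<Rightarrow> bool" where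
  "hypergraph V E \<longleftrightarrow> finite V \<and> (\<forall>e\<in>#E. e \<subseteq> V)"

definition uniform :: "nat \<Rightarrow> 'a set multiset \<Rightarrow> bool" where
  "uniform k E \<longleftrightarrow> (\<forall>e\<in>#E. card e = k)"

definition hdegree :: "'a set multiset \<Rightarrow> 'a \<Rightarrow> nat" where
  "hdegree E v = size (filter_mset (\<lambda>e. v \<in> e) E)"

definition n_deg :: "'a set \<Rightarrow> 'a set multiset \<Rightarrow> nat \<Rightarrow> nat" where
  "n_deg V E i = card {v \<in> V. hdegree E v = i}"

definition n_deg_ge :: "'a set \<Rightarrow> 'a set multiset \<Rightarrow> nat \<Rightarrow> nat" where
  "n_deg_ge V E i = card {v \<in> V. hdegree E v \<ge> i}"

definition transversal :: "'a set \<Rightarrow> 'a set multiset \<Rightarrow> 'a set \<Rightarrow> bool" where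
  "transversal V E T \<longleftrightarrow> T \<subseteq> V \<and> (\<forall>e\<in>#E. T \<inter> e \<noteq> {})"

definition tau :: "'a set \<Rightarrow> 'a set multiset \<Rightarrow> nat" where
  "tau V E = Min (card ` {T. transversal V E T})"

end

theory Submission
  imports Defs
begin

definition W :: "nat \<Rightarrow> real" where
"W d = (if d = 0 then 0 else if d = 1 then 9.5976 else if d = 2 then 14.8298
   else if d = 3 then 16.1586 else 16.6667)"

definition rem :: "'a set multiset \<Rightarrow> 'a \<Rightarrow> 'a set multiset" where
"rem E v = filter_mset (\<lambda>e. v \<notin> e) E"

definition tt :: "'a set multiset \<Rightarrow> 'a \<Rightarrow> 'a \<Rightarrow> nat" where
"tt E v x = size (filter_mset (\<lambda>e. v \<in> e \<and> x \<in> e) E)"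

definition Phi :: "'a set \<Rightarrow> 'a set multiset \<Rightarrow> real" where
"Phi V E = (\<Sum>x\<in>V. W (hdegree E x)) + 16.6667 * real (size E)"

lemma W_mono: "a \<le> b \<Longrightarrow> W a \<le> W b"
  by (auto simp: W_def)

lemma W_nonneg: "0 \<le> W a"
  by (auto simp: W_def)

lemma hdeg_split: "hdegree E x = hdegree (rem E v) x + tt E v x"
  unfolding hdegree_def rem_def tt_def by (induction E) auto

lemma size_rem: "size E = size (rem E v) + hdegree E v"
  unfolding hdegree_def rem_def by (induction E) auto

lemma tt_le: "tt E v x \<le> hdegree E x"
  unfolding hdegree_def tt_def by (induction E) auto

lemma tt_self: "tt E v v = hdegree E v"
  unfolding hdegree_def tt_def by (induction E) auto

lemma tt_pos: "f \<in># E \<Longrightarrow> v \<in> f \<Longrightarrow> x \<in> f \<Longrightarrow> 1 \<le> tt E v x"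
proof -
  assume a: "f \<in># E" "v \<in> f" "x \<in> f"
  then have "f \<in># filter_mset (\<lambda>e. v \<in> e \<and> x \<in> e) E" by simp
  then have "filter_mset (\<lambda>e. v \<in> e \<and> x \<in> e) E \<noteq> {#}" by auto
  then show ?thesis unfolding tt_def
    by (metis One_nat_def Suc_leI neq0_conv size_eq_0_iff_empty)
qed

lemma hdeg_rem_le: "hdegree (rem E v) x \<le> hdegree E x"
  using hdeg_split[of E x v] by simp

lemma hdeg_rem: "hdegree (rem E v) x = hdegree E x - tt E v x"
  using hdeg_split[of E x v] by simp

lemma size_rem_less: "1 \<le> hdegree E v \<Longrightarrow> size (rem E v) < size E"
  using size_rem[of E v] by simp

lemma dc_tt:
  assumes "finite V" "\<forall>e\<in>#E. e \<subseteq> V \<and> card e = 9"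
  shows "(\<Sum>y\<in>V. tt E v y) = 9 * hdegree E v"
  using assms(2)
proof (induction E)
  case empty
  then show ?case by (simp add: tt_def hdegree_def)
next
  case (add a E)
  have a: "a \<subseteq> V" "card a = 9" using add.prems by auto
  have IH: "(\<Sum>y\<in>V. tt E v y) = 9 * hdegree E v" using add by auto
  have e1: "\<And>y. tt (add_mset a E) v y = (if v \<in> a \<and> y \<in> a then 1 else 0) + tt E v y"
    by (simp add: tt_def)
  have "(\<Sum>y\<in>V. tt (add_mset a E) v y) = (\<Sum>y\<in>V. (if v \<in> a \<and> y \<in> a then 1 else 0)) + (\<Sum>y\<in>V. tt E v y)"
    by (simp add: e1 sum.distrib)
  also have "(\<Sum>y\<in>V. (if v \<in> a \<and> y \<in> a then 1 else 0::nat)) = (if v \<in> a then 9 else 0)"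
  proof (cases "v \<in> a")
    case True
    have "(\<Sum>y\<in>V. (if v \<in> a \<and> y \<in> a then 1 else 0::nat)) = (\<Sum>y\<in>V. (if y \<in> a then 1 else 0))"
      using True by simp
    also have "\<dots> = card {y \<in> V. y \<in> a}" using assms(1) by (simp add: sum.inter_filter[symmetric])
    also have "{y \<in> V. y \<in> a} = a" using a by auto
    finally show ?thesis using a True by simp
  qed simp
  finally show ?case using IH by (simp add: hdegree_def)
qed

lemma dc_closed:
  assumes "finite S" "\<forall>e\<in>#E. card e = 9" "\<forall>e\<in>#E. e \<inter> S \<noteq> {} \<longrightarrow> e \<subseteq> S"
  shows "(\<Sum>y\<in>S. hdegree E y) = 9 * size (filter_mset (\<lambda>e. e \<inter> S \<noteq> {}) E)"
  using assms(2,3)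
proof (induction E)
  case empty
  then show ?case by (simp add: hdegree_def)
next
  case (add a E)
  have IH: "(\<Sum>y\<in>S. hdegree E y) = 9 * size (filter_mset (\<lambda>e. e \<inter> S \<noteq> {}) E)" using add by auto
  have e1: "\<And>y. hdegree (add_mset a E) y = (if y \<in> a then 1 else 0) + hdegree E y"
    by (simp add: hdegree_def)
  have "(\<Sum>y\<in>S. hdegree (add_mset a E) y) = (\<Sum>y\<in>S. (if y \<in> a then 1 else 0)) + (\<Sum>y\<in>S. hdegree E y)"
    by (simp add: e1 sum.distrib)
  also have "(\<Sum>y\<in>S. (if y \<in> a then 1 else 0::nat)) = card {y \<in> S. y \<in> a}"
    using assms(1) by (simp add: sum.inter_filter[symmetric])
  also have "card {y \<in> S. y \<in> a} = (if a \<inter> S \<noteq> {} then 9 else 0)"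
  proof (cases "a \<inter> S \<noteq> {}")
    case True
    then have "a \<subseteq> S" using add.prems by auto
    then have "{y \<in> S. y \<in> a} = a" by auto
    then show ?thesis using True add.prems by auto
  next
    case False
    then have "{y \<in> S. y \<in> a} = {}" by auto
    then show ?thesis using False by (metis card.empty)
  qed
  finally show ?case using IH by simp
qed

lemma gain:
  assumes "finite V"
  shows "Phi V E - Phi V (rem E v) = 16.6667 * real (hdegree E v)
     + (\<Sum>x\<in>V. W (hdegree E x) - W (hdegree E x - tt E v x))"
proof -
  have s: "real (size E) = real (size (rem E v)) + real (hdegree E v)"
    using size_rem[of E v] by simp
  have d: "(\<Sum>x\<in>V. W (hdegree E x)) - (\<Sum>x\<in>V. W (hdegree (rem E v) x))
      = (\<Sum>x\<in>V. W (hdegree E x) - W (hdegree E x - tt E v x))"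
    by (simp add: sum_subtractf hdeg_rem)
  show ?thesis unfolding Phi_def using s d by (simp add: algebra_simps)
qed

lemma gain_lb:
  fixes \<alpha> :: real
  assumes fin: "finite V" and unif: "\<forall>e\<in>#E. e \<subseteq> V \<and> card e = 9"
    and degD: "\<forall>x\<in>V. hdegree E x \<le> D"
    and alpha: "\<forall>d t. d \<le> D \<longrightarrow> t \<le> d \<longrightarrow> \<alpha> * real t \<le> W d - W (d - t)"
    and S: "S \<subseteq> V"
  shows "16.6667 * real (hdegree E v) + \<alpha> * 9 * real (hdegree E v)
     + (\<Sum>x\<in>S. W (hdegree E x) - W (hdegree E x - tt E v x) - \<alpha> * real (tt E v x))
     \<le> Phi V E - Phi V (rem E v)"
proof -
  define g where "g x = W (hdegree E x) - W (hdegree E x - tt E v x)" for x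
  have "(\<Sum>x\<in>V. g x) = (\<Sum>x\<in>V. \<alpha> * real (tt E v x)) + (\<Sum>x\<in>V. g x - \<alpha> * real (tt E v x))"
    by (simp add: sum.distrib[symmetric])
  also have "(\<Sum>x\<in>V. \<alpha> * real (tt E v x)) = \<alpha> * 9 * real (hdegree E v)"
  proof -
    have "(\<Sum>x\<in>V. \<alpha> * real (tt E v x)) = \<alpha> * real (\<Sum>x\<in>V. tt E v x)"
      by (simp add: sum_distrib_left)
    also have "\<dots> = \<alpha> * 9 * real (hdegree E v)" using dc_tt[OF fin unif, of v] by simp
    finally show ?thesis .
  qed
  finally have eq: "(\<Sum>x\<in>V. g x) = \<alpha> * 9 * real (hdegree E v) + (\<Sum>x\<in>V. g x - \<alpha> * real (tt E v x))" .
  have nn: "\<forall>x\<in>V. 0 \<le> g x - \<alpha> * real (tt E v x)"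
  proof
    fix x assume "x \<in> V"
    then have "hdegree E x \<le> D" using degD by auto
    then have "\<alpha> * real (tt E v x) \<le> W (hdegree E x) - W (hdegree E x - tt E v x)"
      using alpha tt_le[of E v x] by blast
    then show "0 \<le> g x - \<alpha> * real (tt E v x)" unfolding g_def by simp
  qed
  have "(\<Sum>x\<in>S. g x - \<alpha> * real (tt E v x)) \<le> (\<Sum>x\<in>V. g x - \<alpha> * real (tt E v x))"
    using sum_mono2[OF fin S, of "\<lambda>x. g x - \<alpha> * real (tt E v x)"] nn S by auto
  then show ?thesis using eq gain[OF fin, of E v] unfolding g_def by simp
qed


lemma step_generic:
  fixes \<alpha> \<beta> :: real and D :: nat
  assumes fin: "finite V" and unif: "\<forall>e\<in>#E. e \<subseteq> V \<and> card e = 9"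
    and Dmax: "\<forall>x\<in>V. hdegree E x \<le> D" and vV: "v \<in> V" and dv: "hdegree E v = D"
    and D2: "2 \<le> D"
    and alpha: "\<forall>d t. d \<le> D \<longrightarrow> t \<le> d \<longrightarrow> \<alpha> * real t \<le> W d - W (d - t)"
    and beta: "\<forall>d t. d \<le> D \<longrightarrow> 1 \<le> t \<longrightarrow> t \<le> d \<longrightarrow> (d < D \<or> 2 \<le> t) \<longrightarrow> \<beta> \<le> W d - W (d - t) - \<alpha> * real t"
    and b1: "100 \<le> 16.6667 * real D + \<alpha> * 9 * real D + W D - \<alpha> * real D + \<beta>"
    and b2: "200 \<le> 2 * (16.6667 * real D + \<alpha> * 9 * real D + W D - \<alpha> * real D) + \<beta>"
    and ndvd: "\<not> 9 dvd D * (8 * D + 1)"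
  shows "(\<exists>u\<in>V. 1 \<le> hdegree E u \<and> 100 \<le> Phi V E - Phi V (rem E u))
       \<or> (\<exists>u\<in>V. \<exists>x\<in>V. 1 \<le> hdegree E u \<and> 200 \<le> Phi V E - Phi V (rem (rem E u) x))"
proof (rule ccontr)
  assume neg: "\<not> ?thesis"
  define b where "b = 16.6667 * real D + \<alpha> * 9 * real D + W D - \<alpha> * real D"
  have W0: "W 0 = 0" by (simp add: W_def)
  have b2': "200 \<le> 2 * b + \<beta>" using b2 unfolding b_def .
  have lb: "b + (W (hdegree F y) - W (hdegree F y - tt F u y) - \<alpha> * real (tt F u y))
              \<le> Phi V F - Phi V (rem F u)"
    if F: "\<forall>e\<in>#F. e \<subseteq> V \<and> card e = 9" "\<forall>x\<in>V. hdegree F x \<le> D"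
      and u: "u \<in> V" "hdegree F u = D" and y: "y \<in> V" "y \<noteq> u" for F u y
  proof -
    have "16.6667 * real (hdegree F u) + \<alpha> * 9 * real (hdegree F u)
     + (\<Sum>x\<in>{u,y}. W (hdegree F x) - W (hdegree F x - tt F u x) - \<alpha> * real (tt F u x))
     \<le> Phi V F - Phi V (rem F u)"
      using gain_lb[OF fin F(1) F(2) alpha, of "{u,y}" u] u y by auto
    moreover have "(\<Sum>x\<in>{u,y}. W (hdegree F x) - W (hdegree F x - tt F u x) - \<alpha> * real (tt F u x))
       = (W D - \<alpha> * real D) + (W (hdegree F y) - W (hdegree F y - tt F u y) - \<alpha> * real (tt F u y))"
      using y u by (simp add: tt_self W0)
    ultimately show ?thesis unfolding b_def using u by simp
  qed
  have lb0: "b \<le> Phi V F - Phi V (rem F u)"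
    if F: "\<forall>e\<in>#F. e \<subseteq> V \<and> card e = 9" "\<forall>x\<in>V. hdegree F x \<le> D"
      and uV: "u \<in> V" and u: "hdegree F u = D" for F u
  proof -
    have "16.6667 * real (hdegree F u) + \<alpha> * 9 * real (hdegree F u)
     + (\<Sum>x\<in>{u}. W (hdegree F x) - W (hdegree F x - tt F u x) - \<alpha> * real (tt F u x))
     \<le> Phi V F - Phi V (rem F u)"
      using gain_lb[OF fin F(1) F(2) alpha, of "{u}" u] uV by auto
    then show ?thesis unfolding b_def using u by (simp add: tt_self W0)
  qed
  have single: "100 \<le> Phi V E - Phi V (rem E u)"
    if u: "u \<in> V" "hdegree E u = D" and y: "y \<in> V" "y \<noteq> u" "1 \<le> tt E u y"
      and c: "hdegree E y < D \<or> 2 \<le> tt E u y" for u y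
  proof -
    have "\<beta> \<le> W (hdegree E y) - W (hdegree E y - tt E u y) - \<alpha> * real (tt E u y)"
      using beta[rule_format, of "hdegree E y" "tt E u y"] Dmax y c tt_le[of E u y] by auto
    then show ?thesis using lb[OF unif Dmax u y(1,2)] b1 unfolding b_def by linarith
  qed
  have noG: "\<not> 100 \<le> Phi V E - Phi V (rem E u)" if "u \<in> V" "hdegree E u = D" for u
    using neg that D2 by auto
  have bad: "hdegree E y = D \<and> tt E v y = 1" if "y \<in> V" "y \<noteq> v" "1 \<le> tt E v y" for y
  proof -
    have "\<not> (hdegree E y < D \<or> 2 \<le> tt E v y)"
      using single[OF vV dv that] noG[OF vV dv] by blast
    moreover have "tt E v y \<le> hdegree E y" by (rule tt_le)
    moreover have "hdegree E y \<le> D" using Dmax that by auto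
    ultimately show ?thesis using that by linarith
  qed
  define S where "S = {y \<in> V. 1 \<le> tt E v y}"
  have vS: "v \<in> S" unfolding S_def using vV dv D2 tt_self[of E v] by simp
  have finS: "finite S" unfolding S_def using fin by simp
  have closure: "f \<subseteq> S" if f: "f \<in># E" "f \<inter> S \<noteq> {}" for f
  proof
    fix y assume yf: "y \<in> f"
    have yV: "y \<in> V" using unif f yf by auto
    show "y \<in> S"
    proof (cases "v \<in> f")
      case True
      then show ?thesis unfolding S_def using tt_pos[OF f(1) True yf] yV by simp
    next
      case False
      obtain z where z: "z \<in> f" "z \<in> S" using f by auto
      have zv: "z \<noteq> v" using z False by auto
      have zV: "z \<in> V" and zt: "1 \<le> tt E v z" using z unfolding S_def by auto
      have zD: "hdegree E z = D" and zt1: "tt E v z = 1" using bad[OF zV zv zt] by auto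
      show ?thesis
      proof (rule ccontr)
        assume yS: "y \<notin> S"
        then have yt: "tt E v y = 0" unfolding S_def using yV by simp
        have yz: "y \<noteq> z" using yS z by auto
        have tzy: "1 \<le> tt E z y" by (rule tt_pos[OF f(1) z(1) yf])
        show False
        proof (cases "hdegree E y < D")
          case True
          then show ?thesis using single[OF zV zD yV yz tzy] noG[OF zV zD] by blast
        next
          case False
          then have yD: "hdegree E y = D" using Dmax yV by (meson le_antisym not_less)
          define E' where "E' = rem E v"
          have unif': "\<forall>e\<in>#E'. e \<subseteq> V \<and> card e = 9" using unif unfolding E'_def rem_def by auto
          have Dmax': "\<forall>x\<in>V. hdegree E' x \<le> D"
            using Dmax hdeg_rem_le unfolding E'_def by (meson le_trans)
          have yD': "hdegree E' y = D" unfolding E'_def using hdeg_rem[of E v y] yt yD by simp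
          have zD': "hdegree E' z = D - 1" unfolding E'_def using hdeg_rem[of E v z] zt1 zD by simp
          have fE': "f \<in># E'" unfolding E'_def rem_def using f(1) \<open>v \<notin> f\<close> by simp
          have tyz: "1 \<le> tt E' y z" by (rule tt_pos[OF fE' yf z(1)])
          have tle: "tt E' y z \<le> hdegree E' z" by (rule tt_le)
          have "\<beta> \<le> W (hdegree E' z) - W (hdegree E' z - tt E' y z) - \<alpha> * real (tt E' y z)"
            using beta[rule_format, of "hdegree E' z" "tt E' y z"] zD' tyz tle D2 by auto
          then have g2: "b + \<beta> \<le> Phi V E' - Phi V (rem E' y)"
            using lb[OF unif' Dmax' yV yD' zV yz[symmetric]] by linarith
          have g1: "b \<le> Phi V E - Phi V E'" unfolding E'_def using lb0[OF unif Dmax vV dv] .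
          have "200 \<le> Phi V E - Phi V (rem (rem E v) y)"
            using g1 g2 b2' unfolding E'_def by linarith
          then show False using neg vV yV dv D2 by auto
        qed
      qed
    qed
  qed
  have c1: "(\<Sum>y\<in>S. hdegree E y) = 9 * size (filter_mset (\<lambda>e. e \<inter> S \<noteq> {}) E)"
    using dc_closed[OF finS] unif closure by auto
  have degS: "\<forall>y\<in>S. hdegree E y = D"
    using bad dv unfolding S_def by auto
  have c2: "(\<Sum>y\<in>S. hdegree E y) = D * card S"
    using degS by simp
  have c3: "(\<Sum>y\<in>V. tt E v y) = (\<Sum>y\<in>S. tt E v y)"
    unfolding S_def using fin by (intro sum.mono_neutral_right) auto
  have c4: "(\<Sum>y\<in>S. tt E v y) = tt E v v + (\<Sum>y\<in>S - {v}. tt E v y)"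
    using finS vS by (simp add: sum.remove)
  have c5: "(\<Sum>y\<in>S - {v}. tt E v y) = card (S - {v})"
  proof -
    have "(\<Sum>y\<in>S - {v}. tt E v y) = (\<Sum>y\<in>S - {v}. 1)"
      using bad unfolding S_def by (intro sum.cong) auto
    then show ?thesis by simp
  qed
  have c6: "card S = card (S - {v}) + 1" using finS vS
    by (metis Suc_eq_plus1 card_Suc_Diff1)
  have "9 * D = D + card (S - {v})"
    using dc_tt[OF fin unif, of v] c3 c4 c5 tt_self[of E v] dv by simp
  then have "card S = 8 * D + 1" using c6 by simp
  then have "9 dvd D * (8 * D + 1)" using c1 c2 by (metis dvd_triv_left)
  then show False using ndvd by simp
qed


lemma le4_cases: "(d::nat) \<le> 4 \<Longrightarrow> d = 0 \<or> d = 1 \<or> d = 2 \<or> d = 3 \<or> d = 4" by auto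

lemma al4: "\<forall>d t. d \<le> 4 \<longrightarrow> t \<le> d \<longrightarrow> 0.5081 * real t \<le> W d - W (d - t)"
proof (intro allI impI)
  fix d t :: nat assume "d \<le> 4" "t \<le> d"
  then show "0.5081 * real t \<le> W d - W (d - t)"
    using le4_cases[of d] le4_cases[of t] by (auto simp: W_def)
qed

lemma be4: "\<forall>d t. d \<le> 4 \<longrightarrow> 1 \<le> t \<longrightarrow> t \<le> d \<longrightarrow> (d < 4 \<or> 2 \<le> t) \<longrightarrow> 0.8207 \<le> W d - W (d - t) - 0.5081 * real t"
proof (intro allI impI)
  fix d t :: nat assume "d \<le> 4" "1 \<le> t" "t \<le> d" "d < 4 \<or> 2 \<le> t"
  then show "0.8207 \<le> W d - W (d - t) - 0.5081 * real t"
    using le4_cases[of d] le4_cases[of t] by (auto simp: W_def)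
qed

lemma al3: "\<forall>d t. d \<le> 3 \<longrightarrow> t \<le> d \<longrightarrow> 1.3288 * real t \<le> W d - W (d - t)"
proof (intro allI impI)
  fix d t :: nat assume "d \<le> 3" "t \<le> d"
  then show "1.3288 * real t \<le> W d - W (d - t)"
    using le4_cases[of d] le4_cases[of t] by (auto simp: W_def)
qed

lemma be3: "\<forall>d t. d \<le> 3 \<longrightarrow> 1 \<le> t \<longrightarrow> t \<le> d \<longrightarrow> (d < 3 \<or> 2 \<le> t) \<longrightarrow> 3.9034 \<le> W d - W (d - t) - 1.3288 * real t"
proof (intro allI impI)
  fix d t :: nat assume "d \<le> 3" "1 \<le> t" "t \<le> d" "d < 3 \<or> 2 \<le> t"
  then show "3.9034 \<le> W d - W (d - t) - 1.3288 * real t"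
    using le4_cases[of d] le4_cases[of t] by (auto simp: W_def)
qed

lemma al2: "\<forall>d t. d \<le> 2 \<longrightarrow> t \<le> d \<longrightarrow> 5.2322 * real t \<le> W d - W (d - t)"
proof (intro allI impI)
  fix d t :: nat assume "d \<le> 2" "t \<le> d"
  then show "5.2322 * real t \<le> W d - W (d - t)"
    using le4_cases[of d] le4_cases[of t] by (auto simp: W_def)
qed

lemma al1: "\<forall>d t. d \<le> 1 \<longrightarrow> t \<le> d \<longrightarrow> 9.5976 * real t \<le> W d - W (d - t)"
proof (intro allI impI)
  fix d t :: nat assume "d \<le> 1" "t \<le> d"
  then show "9.5976 * real t \<le> W d - W (d - t)"
    using le4_cases[of d] le4_cases[of t] by (auto simp: W_def)
qed

lemma al0: "\<forall>d t. d \<le> D \<longrightarrow> t \<le> d \<longrightarrow> 0 * real t \<le> W d - W (d - t)"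
  using W_mono by simp

lemma single_lb:
  fixes \<alpha> :: real
  assumes fin: "finite V" and unif: "\<forall>e\<in>#E. e \<subseteq> V \<and> card e = 9"
    and Dmax: "\<forall>x\<in>V. hdegree E x \<le> D" and vV: "v \<in> V"
    and alpha: "\<forall>d t. d \<le> D \<longrightarrow> t \<le> d \<longrightarrow> \<alpha> * real t \<le> W d - W (d - t)"
  shows "16.6667 * real (hdegree E v) + \<alpha> * 9 * real (hdegree E v) + W (hdegree E v) - \<alpha> * real (hdegree E v)
     \<le> Phi V E - Phi V (rem E v)"
proof -
  have "16.6667 * real (hdegree E v) + \<alpha> * 9 * real (hdegree E v)
     + (\<Sum>x\<in>{v}. W (hdegree E x) - W (hdegree E x - tt E v x) - \<alpha> * real (tt E v x))
     \<le> Phi V E - Phi V (rem E v)"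
    using gain_lb[OF fin unif Dmax alpha, of "{v}" v] vV by auto
  then show ?thesis by (simp add: tt_self W_def)
qed

lemma step:
  assumes fin: "finite V" and unif: "\<forall>e\<in>#E. e \<subseteq> V \<and> card e = 9" and ne: "E \<noteq> {#}"
  shows "(\<exists>u\<in>V. 1 \<le> hdegree E u \<and> 100 \<le> Phi V E - Phi V (rem E u))
       \<or> (\<exists>u\<in>V. \<exists>x\<in>V. 1 \<le> hdegree E u \<and> 200 \<le> Phi V E - Phi V (rem (rem E u) x))"
proof -
  obtain e where e: "e \<in># E" using ne by (meson multiset_nonemptyE)
  have "card e = 9" "e \<subseteq> V" using unif e by auto
  then obtain x where x: "x \<in> e" "x \<in> V" by (metis card.empty ex_in_conv subsetD zero_neq_numeral)
  have hx: "1 \<le> hdegree E x" using tt_pos[OF e x(1) x(1)] tt_self[of E x] by simp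
  define D where "D = Max (hdegree E ` V)"
  have Dmax: "\<forall>y\<in>V. hdegree E y \<le> D" unfolding D_def using fin by simp
  have "D \<in> hdegree E ` V" unfolding D_def using fin x(2) by (intro Max_in) auto
  then obtain v where vV: "v \<in> V" and dv: "hdegree E v = D" by auto
  have D1: "1 \<le> D" using hx Dmax x(2) by (meson le_trans)
  consider "5 \<le> D" | "D = 4" | "D = 3" | "D = 2" | "D = 1" using D1 by linarith
  then show ?thesis
  proof cases
    case 1
    have "16.6667 * real D + 0 * 9 * real D + W D - 0 * real D \<le> Phi V E - Phi V (rem E v)"
      using single_lb[OF fin unif Dmax vV al0] dv by simp
    moreover have "W D = 16.6667" using 1 by (simp add: W_def)
    moreover have "real D \<ge> 5" using 1 by simp
    ultimately have "100 \<le> Phi V E - Phi V (rem E v)" by (simp add: algebra_simps)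
    then show ?thesis using vV dv D1 by auto
  next
    case 2
    show ?thesis
      by (rule step_generic[OF fin unif Dmax vV dv _ _ _ _ _, of "0.5081" "0.8207"])
         (use 2 al4 be4 in \<open>simp_all add: W_def\<close>)
  next
    case 3
    show ?thesis
      by (rule step_generic[OF fin unif Dmax vV dv _ _ _ _ _, of "1.3288" "3.9034"])
         (use 3 al3 be3 in \<open>simp_all add: W_def\<close>)
  next
    case 4
    have "16.6667 * real D + 5.2322 * 9 * real D + W D - 5.2322 * real D \<le> Phi V E - Phi V (rem E v)"
    proof -
      have Dm: "\<forall>y\<in>V. hdegree E y \<le> 2" using Dmax 4 by simp
      show ?thesis using single_lb[OF fin unif Dm vV al2] 4 dv by simp
    qed
    then have "100 \<le> Phi V E - Phi V (rem E v)" using 4 by (simp add: W_def)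
    then show ?thesis using vV dv D1 by auto
  next
    case 5
    have "16.6667 * real D + 9.5976 * 9 * real D + W D - 9.5976 * real D \<le> Phi V E - Phi V (rem E v)"
    proof -
      have Dm: "\<forall>y\<in>V. hdegree E y \<le> 1" using Dmax 5 by simp
      show ?thesis using single_lb[OF fin unif Dm vV al1] 5 dv by simp
    qed
    then have "100 \<le> Phi V E - Phi V (rem E v)" using 5 by (simp add: W_def)
    then show ?thesis using vV dv D1 by auto
  qed
qed


lemma main9:
  assumes fin: "finite V"
  shows "\<forall>e\<in>#E. e \<subseteq> V \<and> card e = 9 \<Longrightarrow>
    \<exists>T\<subseteq>V. (\<forall>e\<in>#E. T \<inter> e \<noteq> {}) \<and> 100 * real (card T) \<le> Phi V E"
proof (induction "size E" arbitrary: E rule: less_induct)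
  case less
  note unif = less.prems
  show ?case
  proof (cases "E = {#}")
    case True
    have "0 \<le> Phi V E" unfolding Phi_def using W_nonneg by (simp add: sum_nonneg)
    then show ?thesis using True by (intro exI[of _ "{}"]) simp
  next
    case False
    have unifr: "\<forall>e\<in>#rem F u. e \<subseteq> V \<and> card e = 9" if "\<forall>e\<in>#F. e \<subseteq> V \<and> card e = 9" for F u
      using that unfolding rem_def by auto
    have rsub: "size (rem F u) \<le> size F" for F :: "'a set multiset" and u
      using size_rem[of F u] by simp
    from step[OF fin unif False] show ?thesis
    proof
      assume "\<exists>u\<in>V. 1 \<le> hdegree E u \<and> 100 \<le> Phi V E - Phi V (rem E u)"
      then obtain u where u: "u \<in> V" "1 \<le> hdegree E u" "100 \<le> Phi V E - Phi V (rem E u)" by blast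
      obtain T where T: "T \<subseteq> V" "\<forall>e\<in>#rem E u. T \<inter> e \<noteq> {}" "100 * real (card T) \<le> Phi V (rem E u)"
        using less.hyps[OF size_rem_less[OF u(2)] unifr[OF unif]] by blast
      have "finite T" using T(1) fin finite_subset by auto
      then have c: "card (insert u T) \<le> card T + 1" by (simp add: card_insert_if)
      have "\<forall>e\<in>#E. insert u T \<inter> e \<noteq> {}"
        using T(2) unfolding rem_def by auto
      moreover have "100 * real (card (insert u T)) \<le> Phi V E"
      proof -
        have "real (card (insert u T)) \<le> real (card T) + 1" using c by linarith
        then show ?thesis using T(3) u(3) by linarith
      qed
      ultimately show ?thesis using T(1) u(1) by (intro exI[of _ "insert u T"]) auto
    next
      assume "\<exists>u\<in>V. \<exists>x\<in>V. 1 \<le> hdegree E u \<and> 200 \<le> Phi V E - Phi V (rem (rem E u) x)"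
      then obtain u x where u: "u \<in> V" "x \<in> V" "1 \<le> hdegree E u" "200 \<le> Phi V E - Phi V (rem (rem E u) x)" by blast
      have sz: "size (rem (rem E u) x) < size E"
        using size_rem_less[OF u(3)] rsub[of "rem E u" x] by linarith
      obtain T where T: "T \<subseteq> V" "\<forall>e\<in>#rem (rem E u) x. T \<inter> e \<noteq> {}" "100 * real (card T) \<le> Phi V (rem (rem E u) x)"
        using less.hyps[OF sz unifr[OF unifr[OF unif]]] by blast
      have "finite T" using T(1) fin finite_subset by auto
      then have c: "card (insert u (insert x T)) \<le> card T + 2" by (simp add: card_insert_if)
      have "\<forall>e\<in>#E. insert u (insert x T) \<inter> e \<noteq> {}"
        using T(2) unfolding rem_def by auto
      moreover have "100 * real (card (insert u (insert x T))) \<le> Phi V E"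
      proof -
        have "real (card (insert u (insert x T))) \<le> real (card T) + 2" using c by linarith
        then show ?thesis using T(3) u(4) by linarith
      qed
      ultimately show ?thesis using T(1) u(1,2) by (intro exI[of _ "insert u (insert x T)"]) auto
    qed
  qed
qed

lemma size_filter_mono: "(\<And>e. e \<in># M \<Longrightarrow> P e \<Longrightarrow> Q e) \<Longrightarrow> size (filter_mset P M) \<le> size (filter_mset Q M)"
  by (induction M) auto

theorem mainTheorem5:
  fixes k :: nat and V :: "'a set" and E :: "'a set multiset"
  assumes "9 \<le> k" and "k \<le> 17"
    and "hypergraph V E" and "uniform k E"
  shows "100 * real (tau V E) \<le>
      9.5976 * real (n_deg V E 1) + 14.8298 * real (n_deg V E 2)
    + 16.1586 * real (n_deg V E 3) + 16.6667 * real (n_deg_ge V E 4)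
    + 16.6667 * real (size E)"
proof -
  have fin: "finite V" and sub: "\<forall>e\<in>#E. e \<subseteq> V" using assms(3) unfolding hypergraph_def by auto
  have ck: "\<forall>e\<in>#E. card e = k" using assms(4) unfolding uniform_def by auto
  define sh where "sh e = (SOME s. s \<subseteq> e \<and> card s = 9)" for e :: "'a set"
  have shp: "sh e \<subseteq> e \<and> card (sh e) = 9" if "e \<in># E" for e
  proof -
    have "9 \<le> card e" using ck that assms(1) by auto
    then have "\<exists>s. s \<subseteq> e \<and> card s = 9" using obtain_subset_with_card_n by metis
    then show ?thesis unfolding sh_def by (rule someI_ex)
  qed
  define E9 where "E9 = image_mset sh E"
  have unif9: "\<forall>e\<in>#E9. e \<subseteq> V \<and> card e = 9"
    unfolding E9_def using shp sub by fastforce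
  obtain T where T: "T \<subseteq> V" "\<forall>e\<in>#E9. T \<inter> e \<noteq> {}" "100 * real (card T) \<le> Phi V E9"
    using main9[OF fin unif9] by blast
  have trans: "transversal V E T"
    unfolding transversal_def
  proof (intro conjI ballI)
    fix e assume "e \<in># E"
    then have "T \<inter> sh e \<noteq> {}" "sh e \<subseteq> e" using T(2) shp unfolding E9_def by auto
    then show "T \<inter> e \<noteq> {}" by auto
  qed (rule T(1))
  have "tau V E \<le> card T"
  proof -
    have "{T. transversal V E T} \<subseteq> Pow V" unfolding transversal_def by auto
    then have "finite (card ` {T. transversal V E T})" using fin
      by (meson finite_Pow_iff finite_imageI finite_subset)
    then show ?thesis unfolding tau_def using trans by (intro Min_le) auto
  qed
  have degle: "hdegree E9 x \<le> hdegree E x" for x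
  proof -
    have "hdegree E9 x = size (filter_mset (\<lambda>e. x \<in> sh e) E)"
      unfolding hdegree_def E9_def by (simp add: filter_mset_image_mset)
    also have "\<dots> \<le> hdegree E x" unfolding hdegree_def
      by (rule size_filter_mono) (use shp in auto)
    finally show ?thesis .
  qed
  have "Phi V E9 \<le> Phi V E"
    unfolding Phi_def E9_def using degle W_mono unfolding E9_def
    by (simp add: sum_mono)
  have ind: "real (card {v \<in> V. P v}) = (\<Sum>x\<in>V. if P x then 1 else 0)" for P
    using fin by (simp add: sum.inter_filter[symmetric])
  have Wsplit: "W d = 9.5976 * (if d = 1 then 1 else 0) + 14.8298 * (if d = 2 then 1 else 0)
      + 16.1586 * (if d = 3 then 1 else 0) + 16.6667 * (if 4 \<le> d then 1 else 0)" for d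
    by (simp add: W_def)
  have "(\<Sum>x\<in>V. W (hdegree E x)) = 9.5976 * real (n_deg V E 1) + 14.8298 * real (n_deg V E 2)
    + 16.1586 * real (n_deg V E 3) + 16.6667 * real (n_deg_ge V E 4)"
    unfolding n_deg_def n_deg_ge_def ind Wsplit
    by (simp add: sum.distrib sum_distrib_left)
  then have "Phi V E = 9.5976 * real (n_deg V E 1) + 14.8298 * real (n_deg V E 2)
    + 16.1586 * real (n_deg V E 3) + 16.6667 * real (n_deg_ge V E 4)
    + 16.6667 * real (size E)" unfolding Phi_def by simp
  then show ?thesis using \<open>tau V E \<le> card T\<close> T(3) \<open>Phi V E9 \<le> Phi V E\<close>
    by (smt (verit) of_nat_le_iff)
qed

end
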